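(* Let $K$ be an algebraically closed field of characteristic zero, $\mathcal{K} = K(t)$, $d \ge 2$, $f_d(z) = z^d + t$, $\alpha \in \mathcal{K}$, and $N \ge 1$. Then $v_\infty(\Phi_N(\alpha,t)) < 0$ and \[ h(\Phi_N(\alpha,t)) = D(N)\cdot \widehat{h}_{f_d}(\alpha). \] In particular, $\Phi_N(\alpha,t)$ vanishes at precisely $D(N)\cdot\widehat{h}_{f_d}(\alpha)$ finite places (places $\mathfrak{p}_c$, $c\in K$), counted with multiplicity.
   Context: The $N$th dynatomic polynomial of $f_d$ is $\Phi_N(z,t) := \prod_{n\mid N} (f_d^n(z) - z)^{\mu(N/n)} \in \mathbb{Z}[z,t]$ (a polynomial), where $\mu$ is the Möbius function, and $D(N) := \deg_z \Phi_N = \sum_{n\mid N}\mu(N/n)d^n$. Places of $\mathcal{K}$ are those trivial on $K$, corresponding to $c\in\mathbb{P}^1(K)$; $v_\infty(g) = \deg(\text{denominator}) - \deg(\text{numerator})$. The height $h$ of an element of $K(t)$ is its degree as a rational function, and $\widehat{h}_{f_d}(\alpha) := \lim_{n\to\infty} d^{-n} h(f_d^n(\alpha))$. *)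

theory Defs
  imports "HOL-Computational_Algebra.Computational_Algebra"
          "HOL-Computational_Algebra.Fraction_Field"
begin

definition moebius :: "nat \<Rightarrow> int" where
  "moebius n = (if squarefree n then (-1) ^ card (prime_factors n) else 0)"

(* The variable t of K(t), as an element of K[t] *)
definition tvar :: "'a::field poly" where "tvar = [:0, 1:]"

(* f_d^n(z) - z as a polynomial in z with coefficients in K[t] *)
definition iter_minus_z :: "nat \<Rightarrow> nat \<Rightarrow> 'a::field poly poly" where
  "iter_minus_z d n = ((\<lambda>p. p ^ d + [:tvar:]) ^^ n) [:0, 1:] - [:0, 1:]"

(* N-th dynatomic polynomial Phi_N(z,t) in (K[t])[z]:
   product of factors with mu = 1 divided (exactly) by product of factors with mu = -1 *)
definition dynatomic :: "nat \<Rightarrow> nat \<Rightarrow> 'a::field poly poly" where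
  "dynatomic d N =
     (\<Prod>n\<in>{n. n dvd N \<and> moebius (N div n) = 1}. iter_minus_z d n) div
     (\<Prod>n\<in>{n. n dvd N \<and> moebius (N div n) = -1}. iter_minus_z d n)"

(* D(N) = deg_z Phi_N *)
definition Ddeg :: "nat \<Rightarrow> nat \<Rightarrow> int" where
  "Ddeg d N = (\<Sum>n | n dvd N. moebius (N div n) * int d ^ n)"

type_synonym 'a ratfun = "'a poly fract"

definition tK :: "'a::field ratfun" where "tK = Fract tvar 1"

definition f_map :: "nat \<Rightarrow> 'a::field ratfun \<Rightarrow> 'a ratfun" where
  "f_map d z = z ^ d + tK"

definition dyn_eval :: "nat \<Rightarrow> nat \<Rightarrow> 'a::field ratfun \<Rightarrow> 'a ratfun" where
  "dyn_eval d N \<alpha> = poly (map_poly (\<lambda>c. Fract c 1) (dynatomic d N)) \<alpha>"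

definition rquot :: "'a::field ratfun \<Rightarrow> 'a poly \<times> 'a poly" where
  "rquot g = (SOME (p, q). q \<noteq> 0 \<and> lead_coeff q = 1 \<and> coprime p q \<and> g = Fract p q)"
definition rnum :: "'a::field ratfun \<Rightarrow> 'a poly" where "rnum g = fst (rquot g)"
definition rden :: "'a::field ratfun \<Rightarrow> 'a poly" where "rden g = snd (rquot g)"

definition ht :: "'a::field ratfun \<Rightarrow> nat" where
  "ht g = max (degree (rnum g)) (degree (rden g))"

definition v_inf :: "'a::field ratfun \<Rightarrow> int" where
  "v_inf g = int (degree (rden g)) - int (degree (rnum g))"

(* valuation at the finite place p_c (t = c), for g \<noteq> 0 *)
definition v_fin :: "'a::field \<Rightarrow> 'a ratfun \<Rightarrow> int" where
  "v_fin c g = int (order c (rnum g)) - int (order c (rden g))"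

definition canon_ht :: "nat \<Rightarrow> 'a::field ratfun \<Rightarrow> real" where
  "canon_ht d \<alpha> = lim (\<lambda>n. real (ht ((f_map d ^^ n) \<alpha>)) / real d ^ n)"

definition alg_closed :: "'a::field itself \<Rightarrow> bool" where
  "alg_closed _ \<longleftrightarrow> (\<forall>p::'a poly. 0 < degree p \<longrightarrow> (\<exists>x. poly p x = 0))"

end

theory Submission
  imports Defs
begin

lemma moebius_vals: "moebius n = 1 \<or> moebius n = -1 \<or> moebius n = 0"
  unfolding moebius_def by (auto simp: minus_one_power_iff)

lemma moebius_1 [simp]: "moebius 1 = 1"
  unfolding moebius_def by simp

lemma moebius_Suc0 [simp]: "moebius (Suc 0) = 1"
  unfolding moebius_def by simp

lemma moebius_abs_le: "\<bar>moebius n\<bar> \<le> 1"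
  using moebius_vals[of n] by auto

lemma moebius_prime_mult:
  assumes p: "prime (p::nat)" and nd: "\<not> p dvd m" and m: "m > 0"
  shows "moebius (p * m) = - moebius m"
proof -
  have cop: "coprime p m" using p nd by (simp add: prime_imp_coprime)
  have sq: "squarefree (p*m) \<longleftrightarrow> squarefree m"
  proof
    assume "squarefree (p*m)" thus "squarefree m" by (rule squarefree_mono[rotated]) simp
  next
    assume "squarefree m" thus "squarefree (p*m)"
      using squarefree_mult_coprime[OF cop] squarefree_prime[OF p] by blast
  qed
  have pf: "prime_factors (p*m) = insert p (prime_factors m)"
    using prime_factors_product[of p m] p m prime_prime_factors[OF p] by (auto simp: prime_gt_0_nat)
  have pn: "p \<notin> prime_factors m" using nd by auto
  show ?thesis unfolding moebius_def sq pf using pn by simp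
qed

lemma moebius_sum_divisors:
  assumes "M > (0::nat)"
  shows "(\<Sum>m | m dvd M. moebius m) = (if M = 1 then 1 else 0)"
proof (cases "M = 1")
  case True
  have "{m. m dvd M} = {1}" using True by auto
  thus ?thesis using True by (simp add: moebius_def)
next
  case False
  then have "M \<noteq> 1" .
  then obtain p where p: "prime p" "p dvd M" using prime_factor_nat by blast
  define S where "S = {m. m dvd M}"
  define S0 where "S0 = {m\<in>S. \<not> p dvd m}"
  define S1 where "S1 = {m\<in>S. p dvd m \<and> \<not> p^2 dvd m}"
  define S2 where "S2 = {m\<in>S. p^2 dvd m}"
  have fin: "finite S" unfolding S_def using assms by simp
  have S_split: "S = S0 \<union> S1 \<union> S2" unfolding S0_def S1_def S2_def by auto
  have f0: "finite S0" "finite S1" "finite S2" using fin unfolding S0_def S1_def S2_def by auto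
  have d01: "S0 \<inter> S1 = {}" "(S0 \<union> S1) \<inter> S2 = {}" unfolding S0_def S1_def S2_def
    by (auto simp: power2_eq_square)
  have z2: "\<And>m. m \<in> S2 \<Longrightarrow> moebius m = 0"
  proof -
    fix m assume "m \<in> S2"
    hence "p^2 dvd m" unfolding S2_def by auto
    hence "\<not> squarefree m" using p(1) by (intro not_squarefreeI[of p]) auto
    thus "moebius m = 0" unfolding moebius_def by simp
  qed
  have img: "S1 = (\<lambda>m. p*m) ` S0"
  proof
    show "(\<lambda>m. p*m) ` S0 \<subseteq> S1"
    proof
      fix x assume "x \<in> (\<lambda>m. p*m) ` S0"
      then obtain m where x: "x = p*m" and m: "m dvd M" "\<not> p dvd m" unfolding S0_def S_def by auto
      have "coprime p m" using p(1) m(2) by (simp add: prime_imp_coprime)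
      hence "p*m dvd M" using p(2) m(1) by (simp add: divides_mult)
      moreover have "\<not> p^2 dvd p*m" using m(2) p(1) by (auto simp: power2_eq_square prime_gt_0_nat)
      ultimately show "x \<in> S1" unfolding S1_def S_def x by auto
    qed
  next
    show "S1 \<subseteq> (\<lambda>m. p*m) ` S0"
    proof
      fix x assume x: "x \<in> S1"
      then obtain m where m: "x = p*m" unfolding S1_def by auto
      have "m dvd M" using x m unfolding S1_def S_def by (metis dvd_mult_right mem_Collect_eq)
      moreover have "\<not> p dvd m" using x m unfolding S1_def by (auto simp: power2_eq_square)
      ultimately show "x \<in> (\<lambda>m. p*m) ` S0" unfolding S0_def S_def m by auto
    qed
  qed
  have inj: "inj_on (\<lambda>m. p*m) S0" using p(1) by (auto simp: inj_on_def prime_gt_0_nat)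
  have "sum moebius S1 = sum (\<lambda>m. moebius (p*m)) S0"
    unfolding img by (subst sum.reindex[OF inj]) simp
  also have "\<dots> = sum (\<lambda>m. - moebius m) S0"
  proof (rule sum.cong[OF refl])
    fix m assume m: "m \<in> S0"
    hence "m > 0" using assms unfolding S0_def S_def by (auto intro: Nat.gr0I)
    thus "moebius (p*m) = - moebius m" using m p(1) unfolding S0_def by (simp add: moebius_prime_mult)
  qed
  finally have s1: "sum moebius S1 = - sum moebius S0" by (simp add: sum_negf)
  have "sum moebius S = sum moebius S0 + sum moebius S1 + sum moebius S2"
    unfolding S_split using f0 d01 by (simp add: sum.union_disjoint)
  also have "sum moebius S2 = 0" using z2 by simp
  finally have "sum moebius S = 0" using s1 by simp
  thus ?thesis unfolding S_def using False by simp
qed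


lemma moebius_sum_divisors_flip:
  assumes "M > (0::nat)"
  shows "(\<Sum>j | j dvd M. moebius (M div j)) = (if M = 1 then 1 else 0)"
proof -
  have "(\<Sum>j | j dvd M. moebius (M div j)) = (\<Sum>m | m dvd M. moebius m)"
  proof (rule sum.reindex_bij_witness[of _ "\<lambda>m. M div m" "\<lambda>m. M div m"])
    fix a assume a: "a \<in> {m. m dvd M}"
    then obtain c where c: "M = a * c" by (auto elim: dvdE)
    have "a > 0" "c > 0" using assms c by (auto intro: Nat.gr0I)
    thus "M div (M div a) = a" "M div a \<in> {j. j dvd M}" using c by auto
  next
    fix a assume a: "a \<in> {j. j dvd M}"
    then obtain c where c: "M = a * c" by (auto elim: dvdE)
    have "a > 0" "c > 0" using assms c by (auto intro: Nat.gr0I)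
    thus "M div (M div a) = a" "M div a \<in> {m. m dvd M}" using c by auto
  qed simp
  thus ?thesis using moebius_sum_divisors[OF assms] by simp
qed

lemma moebius_closed_sum_nonneg:
  fixes N :: nat
  assumes N: "N > 0" and T: "T \<subseteq> {n. n dvd N}"
    and gcdc: "\<And>m n. m \<in> T \<Longrightarrow> n \<in> T \<Longrightarrow> gcd m n \<in> T"
    and up: "\<And>m n. m \<in> T \<Longrightarrow> n dvd N \<Longrightarrow> m dvd n \<Longrightarrow> n \<in> T"
  shows "(\<Sum>n\<in>T. moebius (N div n)) \<ge> 0"
proof (cases "T = {}")
  case True thus ?thesis by simp
next
  case False
  have finT: "finite T" using T N by (metis finite_divisors_nat finite_subset)
  define k where "k = Min T"
  have kT: "k \<in> T" unfolding k_def using finT False by simp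
  have pos: "\<And>n. n \<in> T \<Longrightarrow> n > 0" using T N by (auto intro: Nat.gr0I)
  have kdvd: "\<And>n. n \<in> T \<Longrightarrow> k dvd n"
  proof -
    fix n assume n: "n \<in> T"
    have g: "gcd k n \<in> T" using gcdc kT n by blast
    have "gcd k n \<le> k" using pos[OF kT] by (simp add: gcd_le1_nat)
    moreover have "k \<le> gcd k n" using Min_le[OF finT g] k_def by simp
    ultimately have "gcd k n = k" by simp
    thus "k dvd n" by (metis gcd_dvd2)
  qed
  have kN: "k dvd N" using kT T by auto
  define M where "M = N div k"
  have M: "M > 0" unfolding M_def using kN N pos[OF kT] by (auto simp: dvd_div_eq_0_iff)
  have Teq: "T = (\<lambda>j. k*j) ` {j. j dvd M}"
  proof
    show "T \<subseteq> (\<lambda>j. k*j) ` {j. j dvd M}"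
    proof
      fix n assume n: "n \<in> T"
      then obtain j where j: "n = k*j" using kdvd by (auto elim: dvdE)
      have "n dvd N" using n T by auto
      then obtain c where c: "N = k*j*c" unfolding j by (auto elim: dvdE)
      hence "M = j*c" unfolding M_def using pos[OF kT] by (simp add: mult.assoc)
      hence "j dvd M" by simp
      thus "n \<in> (\<lambda>j. k*j) ` {j. j dvd M}" using j by auto
    qed
  next
    show "(\<lambda>j. k*j) ` {j. j dvd M} \<subseteq> T"
    proof
      fix n assume "n \<in> (\<lambda>j. k*j) ` {j. j dvd M}"
      then obtain j where j: "n = k*j" "j dvd M" by auto
      have NkM: "N = k * M" unfolding M_def using kN by simp
      have "n dvd N" unfolding j NkM using j(2) by (simp add: mult_dvd_mono)
      thus "n \<in> T" using up[OF kT] j by auto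
    qed
  qed
  have inj: "inj_on (\<lambda>j. k*j) {j. j dvd M}" using pos[OF kT] by (auto simp: inj_on_def)
  have "(\<Sum>n\<in>T. moebius (N div n)) = (\<Sum>j | j dvd M. moebius (N div (k*j)))"
    unfolding Teq by (subst sum.reindex[OF inj]) simp
  also have "\<dots> = (\<Sum>j | j dvd M. moebius (M div j))"
    unfolding M_def by (simp add: div_mult2_eq)
  also have "\<dots> \<ge> 0" using moebius_sum_divisors_flip[OF M] by simp
  finally show ?thesis .
qed


lemma geom_lt: "(d::nat) \<ge> 2 \<Longrightarrow> (\<Sum>i<m. d^i) < d^m"
proof (induction m)
  case 0 thus ?case by simp
next
  case (Suc m)
  have "(\<Sum>i<Suc m. d^i) = (\<Sum>i<m. d^i) + d^m" by simp
  also have "\<dots> < d^m + d^m" using Suc by simp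
  also have "\<dots> \<le> d * d^m" using Suc.prems by (simp add: mult_2[symmetric] mult_right_mono)
  finally show ?case by simp
qed

definition Dp :: "nat \<Rightarrow> nat \<Rightarrow> int" where
  "Dp d N = (\<Sum>n | n dvd N. moebius (N div n) * int d ^ (n - 1))"

lemma Ddeg_Dp: "N > 0 \<Longrightarrow> Ddeg d N = int d * Dp d N"
  unfolding Ddeg_def Dp_def sum_distrib_left
proof (rule sum.cong[OF refl])
  fix n assume "N > 0" "n \<in> {n. n dvd N}"
  hence "n > 0" by (auto intro: Nat.gr0I)
  hence "int d ^ n = int d * int d ^ (n-1)" by (cases n) auto
  thus "moebius (N div n) * int d ^ n = int d * (moebius (N div n) * int d ^ (n - 1))" by simp
qed

lemma Dp_pos:
  assumes d: "d \<ge> 2" and N: "N > 0"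
  shows "Dp d N > 0"
proof -
  define S where "S = {n. n dvd N}"
  have fin: "finite S" unfolding S_def using N by simp
  have NS: "N \<in> S" unfolding S_def by simp
  have "Dp d N = int d ^ (N-1) + (\<Sum>n\<in>S-{N}. moebius (N div n) * int d ^ (n - 1))"
    unfolding Dp_def S_def[symmetric] using sum.remove[OF fin NS, of "\<lambda>n. moebius (N div n) * int d ^ (n - 1)"] N by simp
  moreover have "(\<Sum>n\<in>S-{N}. moebius (N div n) * int d ^ (n - 1)) \<ge> - (\<Sum>n\<in>S-{N}. int d ^ (n - 1))"
  proof -
    have "(\<Sum>n\<in>S-{N}. - (int d ^ (n - 1))) \<le> (\<Sum>n\<in>S-{N}. moebius (N div n) * int d ^ (n - 1))"
    proof (rule sum_mono)
      fix n
      have "\<bar>moebius (N div n) * int d ^ (n - 1)\<bar> \<le> int d ^ (n-1)"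
        using moebius_abs_le[of "N div n"] by (simp add: abs_mult mult_left_le_one_le)
      thus "- (int d ^ (n - 1)) \<le> moebius (N div n) * int d ^ (n - 1)" by linarith
    qed
    thus ?thesis by (simp add: sum_negf)
  qed
  moreover have "(\<Sum>n\<in>S-{N}. int d ^ (n - 1)) \<le> (\<Sum>n\<in>{1..<N}. int d ^ (n - 1))"
  proof (rule sum_mono2)
    show "S - {N} \<subseteq> {1..<N}"
    proof
      fix n assume n: "n \<in> S - {N}"
      hence "n dvd N" "n \<noteq> N" unfolding S_def by auto
      moreover have "n \<le> N" using \<open>n dvd N\<close> N by (simp add: dvd_imp_le)
      moreover have "n > 0" using \<open>n dvd N\<close> N by (auto intro: Nat.gr0I)
      ultimately show "n \<in> {1..<N}" by auto
    qed
  qed auto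
  moreover have "(\<Sum>n\<in>{1..<N}. int d ^ (n - 1)) = int (\<Sum>i<N-1. d^i)"
  proof -
    have "(\<Sum>n\<in>{1..<N}. int d ^ (n - 1)) = (\<Sum>i\<in>{0..<N-1}. int d ^ i)"
      by (rule sum.reindex_bij_witness[of _ "\<lambda>i. i+1" "\<lambda>n. n-1"]) auto
    thus ?thesis by (simp add: atLeast0LessThan)
  qed
  moreover have "int (\<Sum>i<N-1. d^i) < int d ^ (N-1)"
    using geom_lt[OF d, of "N-1"] by (metis of_nat_less_iff of_nat_power)
  ultimately show ?thesis by linarith
qed

lemma Ddeg_pos: "d \<ge> 2 \<Longrightarrow> N > 0 \<Longrightarrow> Ddeg d N > 0"
  using Ddeg_Dp Dp_pos by simp


lemma diff_dvd_power_diff: "(x - y :: 'b::comm_ring_1) dvd x ^ n - y ^ n"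
proof (induction n)
  case 0 thus ?case by simp
next
  case (Suc n)
  have "x ^ Suc n - y ^ Suc n = x * (x^n - y^n) + (x - y) * y^n" by (simp add: algebra_simps)
  thus ?case using Suc by (simp add: dvd_add)
qed

definition Gm :: "nat \<Rightarrow> 'b \<Rightarrow> 'b::comm_ring_1 poly \<Rightarrow> 'b poly" where
  "Gm d c p = p ^ d + [:c:]"

lemma Gm_iter_diff_dvd: "(a - b) dvd (Gm d c ^^ k) a - (Gm d c ^^ k) b"
proof (induction k)
  case 0 thus ?case by simp
next
  case (Suc k)
  have "(Gm d c ^^ Suc k) a - (Gm d c ^^ Suc k) b = ((Gm d c ^^ k) a)^d - ((Gm d c ^^ k) b)^d"
    by (simp add: Gm_def)
  moreover have "(Gm d c ^^ k) a - (Gm d c ^^ k) b dvd \<dots>" by (rule diff_dvd_power_diff)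
  ultimately show ?case using Suc dvd_trans by simp
qed

definition Fm :: "nat \<Rightarrow> 'b \<Rightarrow> nat \<Rightarrow> 'b::comm_ring_1 poly" where
  "Fm d c n = (Gm d c ^^ n) [:0,1:] - [:0,1:]"

lemma iter_minus_z_Fm: "iter_minus_z d n = Fm d [:0,1:] n"
  unfolding iter_minus_z_def Fm_def Gm_def tvar_def by (rule refl)

lemma Fm_0 [simp]: "Fm d c 0 = 0" by (simp add: Fm_def)

lemma Fm_dvd_diff:
  assumes "m \<le> n"
  shows "Fm d c m dvd Fm d c n - Fm d c (n - m)"
proof -
  have n: "n = (n - m) + m" using assms by simp
  have "Fm d c n - Fm d c (n - m) = (Gm d c ^^ (n-m)) ((Gm d c ^^ m) [:0,1:]) - (Gm d c ^^ (n-m)) [:0,1:]"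
    unfolding Fm_def by (subst n) (simp add: funpow_add)
  thus ?thesis unfolding Fm_def using Gm_iter_diff_dvd[where a="(Gm d c ^^ m) [:0,1:]" and b="[:0,1:]" and d=d and c=c and k="n-m"] by simp
qed

lemma Fm_common_dvd_gcd:
  "x dvd Fm d c m \<Longrightarrow> x dvd Fm d c n \<Longrightarrow> x dvd Fm d c (gcd m n)"
proof (induction "m + n" arbitrary: m n rule: less_induct)
  case less
  show ?case
  proof (cases "m = 0 \<or> n = 0")
    case True thus ?thesis using less.prems by auto
  next
    case False
    show ?thesis
    proof (cases "m \<le> n")
      case True
      have "x dvd Fm d c n - Fm d c (n - m)" using Fm_dvd_diff[OF True] less.prems(1) dvd_trans by blast
      hence "x dvd Fm d c (n - m)" using dvd_diff[OF less.prems(2), of "Fm d c n - Fm d c (n - m)"] by simp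
      hence "x dvd Fm d c (gcd m (n - m))" using less.hyps[of m "n-m"] False True less.prems(1) by simp
      moreover have "gcd m (n - m) = gcd m n" using gcd_add2[of m "n-m"] True by simp
      ultimately show ?thesis by simp
    next
      case nle: False
      hence le: "n \<le> m" by simp
      have "x dvd Fm d c m - Fm d c (m - n)" using Fm_dvd_diff[OF le] less.prems(2) dvd_trans by blast
      hence "x dvd Fm d c (m - n)" using dvd_diff[OF less.prems(1), of "Fm d c m - Fm d c (m - n)"] by simp
      hence "x dvd Fm d c (gcd n (m - n))" using less.hyps[of n "m-n"] False le less.prems(2) by simp
      moreover have "gcd n (m - n) = gcd m n" using gcd_add2[of n "m-n"] le by (simp add: gcd.commute)
      ultimately show ?thesis by simp
    qed
  qed
qed

lemma Fm_dvd_mult: "Fm d c m dvd Fm d c (k * m)"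
proof (induction k)
  case 0 thus ?case by simp
next
  case (Suc k)
  have "Fm d c m dvd Fm d c (Suc k * m) - Fm d c (Suc k * m - m)" by (rule Fm_dvd_diff) simp
  moreover have "Suc k * m - m = k * m" by simp
  ultimately have "Fm d c m dvd Fm d c (Suc k * m) - Fm d c (k * m)" by simp
  hence "Fm d c m dvd (Fm d c (Suc k * m) - Fm d c (k * m)) + Fm d c (k * m)" using Suc by (intro dvd_add)
  thus ?case by simp
qed

lemma Fm_dvd: "m dvd n \<Longrightarrow> Fm d c m dvd Fm d c n"
proof -
  assume "m dvd n"
  then obtain k where "n = m * k" by (auto elim: dvdE)
  thus ?thesis using Fm_dvd_mult[of d c m k] by (simp add: mult.commute)
qed

lemma Gm_iter_deg:
  fixes c :: "'b::idom"
  assumes d: "d \<ge> 2"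
  shows "degree ((Gm d c ^^ n) [:0,1:]) = d ^ n \<and> lead_coeff ((Gm d c ^^ n) [:0,1:]) = 1"
proof (induction n)
  case 0 thus ?case by simp
next
  case (Suc n)
  let ?p = "(Gm d c ^^ n) [:0,1:]"
  have p0: "?p \<noteq> 0" using Suc by auto
  have dp: "degree (?p ^ d) = d * d^n" using Suc p0 by (simp add: degree_power_eq)
  have pos: "d * d^n > 0" using d by simp
  have "degree (?p ^ d + [:c:]) = degree (?p ^ d)" using dp pos by (intro degree_add_eq_left) auto
  moreover have "lead_coeff ([:c:] + ?p ^ d) = lead_coeff (?p ^ d)"
    using dp pos by (intro lead_coeff_add_le) auto
  hence "lead_coeff (?p ^ d + [:c:]) = lead_coeff (?p ^ d)" by (simp add: add.commute)
  moreover have eq: "(Gm d c ^^ Suc n) [:0,1:] = ?p ^ d + [:c:]" by (simp add: Gm_def)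
  moreover have lp: "lead_coeff ?p = 1" using Suc.IH by blast
  have lc: "lead_coeff (?p ^ d) = 1" unfolding lead_coeff_power lp by simp
  ultimately have A: "degree (?p ^ d + [:c:]) = d ^ Suc n" "lead_coeff (?p ^ d + [:c:]) = 1"
    using dp by simp_all
  show ?case unfolding eq using A by simp
qed

lemma Fm_deg:
  fixes c :: "'b::idom"
  assumes d: "d \<ge> 2" and n: "n \<ge> 1"
  shows "degree (Fm d c n) = d ^ n" "lead_coeff (Fm d c n) = 1" "Fm d c n \<noteq> 0"
proof -
  have 1: "degree ((Gm d c ^^ n) [:0,1:]) = d ^ n" "lead_coeff ((Gm d c ^^ n) [:0,1:]) = 1"
    using Gm_iter_deg[OF d] by auto
  have "d ^ n \<ge> d ^ 1" using n d by (intro power_increasing) auto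
  hence gt: "d ^ n > 1" using d by simp
  have fe: "Fm d c n = (Gm d c ^^ n) [:0,1:] + - [:0,1:]" unfolding Fm_def by simp
  have "degree (Fm d c n) = degree ((Gm d c ^^ n) [:0,1:])"
    unfolding fe using 1 gt by (intro degree_add_eq_left) simp
  thus dF: "degree (Fm d c n) = d ^ n" using 1 by simp
  have "lead_coeff (Fm d c n) = lead_coeff ((Gm d c ^^ n) [:0,1:])"
  proof -
    have fe2: "Fm d c n = - [:0,1:] + (Gm d c ^^ n) [:0,1:]" unfolding Fm_def by simp
    show ?thesis unfolding fe2 using 1 gt by (intro lead_coeff_add_le) simp
  qed
  thus "lead_coeff (Fm d c n) = 1" using 1 by simp
  thus "Fm d c n \<noteq> 0" by auto
qed


lemma moebius_split_sum:
  fixes g :: "nat \<Rightarrow> 'r::comm_ring_1"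
  assumes N: "N > 0"
  shows "(\<Sum>n | n dvd N. of_int (moebius (N div n)) * g n) =
         (\<Sum>n\<in>{n. n dvd N \<and> moebius (N div n) = 1}. g n) - (\<Sum>n\<in>{n. n dvd N \<and> moebius (N div n) = -1}. g n)"
proof -
  define S where "S = {n. n dvd N}"
  have fin: "finite S" unfolding S_def using N by simp
  define Sp where "Sp = {n\<in>S. moebius (N div n) = 1}"
  define Sm where "Sm = {n\<in>S. moebius (N div n) = -1}"
  define Sz where "Sz = {n\<in>S. moebius (N div n) = 0}"
  have Seq: "S = Sp \<union> Sm \<union> Sz" unfolding Sp_def Sm_def Sz_def using moebius_vals by blast
  have fins: "finite Sp" "finite Sm" "finite Sz" using fin unfolding Sp_def Sm_def Sz_def by auto
  have disj: "Sp \<inter> Sm = {}" "(Sp \<union> Sm) \<inter> Sz = {}" unfolding Sp_def Sm_def Sz_def by auto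
  have "(\<Sum>n\<in>S. of_int (moebius (N div n)) * g n) =
        (\<Sum>n\<in>Sp. of_int (moebius (N div n)) * g n) + (\<Sum>n\<in>Sm. of_int (moebius (N div n)) * g n)
        + (\<Sum>n\<in>Sz. of_int (moebius (N div n)) * g n)"
    unfolding Seq using fins disj by (simp add: sum.union_disjoint)
  also have "(\<Sum>n\<in>Sp. of_int (moebius (N div n)) * g n) = (\<Sum>n\<in>Sp. g n)"
    unfolding Sp_def by (rule sum.cong) auto
  also have "(\<Sum>n\<in>Sm. of_int (moebius (N div n)) * g n) = - (\<Sum>n\<in>Sm. g n)"
    unfolding Sm_def by (simp add: sum_negf[symmetric])
  also have "(\<Sum>n\<in>Sz. of_int (moebius (N div n)) * g n) = 0"
    unfolding Sz_def by simp
  finally show ?thesis unfolding S_def Sp_def Sm_def by simp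
qed

lemma moebius_weighted_nonneg:
  fixes N :: nat and e :: "nat \<Rightarrow> nat"
  assumes N: "N > 0"
    and mono: "\<And>m n. m dvd N \<Longrightarrow> n dvd N \<Longrightarrow> m dvd n \<Longrightarrow> e m \<le> e n"
    and gcdc: "\<And>m n j. m dvd N \<Longrightarrow> n dvd N \<Longrightarrow> j \<le> e m \<Longrightarrow> j \<le> e n \<Longrightarrow> j \<le> e (gcd m n)"
  shows "(\<Sum>n | n dvd N. moebius (N div n) * int (e n)) \<ge> 0"
proof -
  define S where "S = {n. n dvd N}"
  have fin: "finite S" unfolding S_def using N by simp
  define E where "E = (\<Sum>n\<in>S. e n)"
  have eE: "\<And>n. n \<in> S \<Longrightarrow> e n \<le> E" unfolding E_def using fin by (intro member_le_sum) auto
  have ecount: "\<And>n. n \<in> S \<Longrightarrow> int (e n) = (\<Sum>j\<in>{1..E}. if j \<le> e n then 1 else 0)"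
  proof -
    fix n assume n: "n \<in> S"
    have eq: "{1..E} \<inter> {j. j \<le> e n} = {1..e n}" using eE[OF n] by auto
    have "(\<Sum>j\<in>{1..E}. (if j \<le> e n then 1 else 0::int)) = int (card ({1..E} \<inter> {j. j \<le> e n}))"
      by (simp add: sum.If_cases)
    hence "(\<Sum>j\<in>{1..E}. (if j \<le> e n then 1 else 0::int)) = int (card {1..e n})"
      by (simp only: eq)
    thus "int (e n) = (\<Sum>j\<in>{1..E}. if j \<le> e n then 1 else 0)" by simp
  qed
  have "(\<Sum>n\<in>S. moebius (N div n) * int (e n)) =
        (\<Sum>n\<in>S. \<Sum>j\<in>{1..E}. moebius (N div n) * (if j \<le> e n then 1 else 0))"
    by (rule sum.cong[OF refl]) (simp add: ecount sum_distrib_left)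
  also have "\<dots> = (\<Sum>j\<in>{1..E}. \<Sum>n\<in>S. moebius (N div n) * (if j \<le> e n then 1 else 0))"
    by (rule sum.swap)
  also have "\<dots> = (\<Sum>j\<in>{1..E}. \<Sum>n\<in>{n\<in>S. j \<le> e n}. moebius (N div n))"
    by (rule sum.cong[OF refl]) (simp add: sum.inter_filter[OF fin, symmetric] if_distrib cong: if_cong)
  also have "\<dots> \<ge> 0"
  proof (rule sum_nonneg)
    fix j assume "j \<in> {1..E}"
    show "(\<Sum>n\<in>{n\<in>S. j \<le> e n}. moebius (N div n)) \<ge> 0"
    proof (rule moebius_closed_sum_nonneg[OF N])
      show "{n\<in>S. j \<le> e n} \<subseteq> {n. n dvd N}" unfolding S_def by auto
    next
      fix m n assume "m \<in> {n\<in>S. j \<le> e n}" "n \<in> {n\<in>S. j \<le> e n}"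
      thus "gcd m n \<in> {n\<in>S. j \<le> e n}" unfolding S_def using gcdc by (auto intro: dvd_trans)
    next
      fix m n assume "m \<in> {n\<in>S. j \<le> e n}" "n dvd N" "m dvd n"
      thus "n \<in> {n\<in>S. j \<le> e n}" unfolding S_def using mono by (auto intro: le_trans)
    qed
  qed
  finally show ?thesis unfolding S_def .
qed


context
begin

interpretation fpoly:
  normalization_euclidean_semiring_multiplicative where zero = "0 :: 'a :: field poly"
    and one = 1 and plus = plus and minus = minus
    and times = times
    and normalize = "\<lambda>p. smult (inverse (lead_coeff p)) p"
    and unit_factor = "\<lambda>p. [:lead_coeff p:]"
    and euclidean_size = "\<lambda>p. if p = 0 then 0 else 2 ^ degree p"
    and divide = divide and modulo = modulo
  rewrites "dvd.dvd (times :: 'a poly \<Rightarrow> _) = Rings.dvd"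
    and "comm_monoid_mult.prod_mset times 1 = prod_mset"
    and "comm_semiring_1.irreducible times 1 0 = irreducible"
    and "comm_semiring_1.prime_elem times 1 0 = prime_elem"
proof -
  show "dvd.dvd (times :: 'a poly \<Rightarrow> _) = Rings.dvd"
    by (simp add: dvd_dict)
  show "comm_monoid_mult.prod_mset times 1 = prod_mset"
    by (simp add: prod_mset_dict)
  show "comm_semiring_1.irreducible times 1 0 = irreducible"
    by (simp add: irreducible_dict)
  show "comm_semiring_1.prime_elem times 1 0 = prime_elem"
    by (simp add: prime_elem_dict)
  show "class.normalization_euclidean_semiring_multiplicative divide plus minus (0 :: 'a poly) times 1
    modulo (\<lambda>p. if p = 0 then 0 else 2 ^ degree p)
    (\<lambda>p. [:lead_coeff p:]) (\<lambda>p. smult (inverse (lead_coeff p)) p)"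
  proof (standard, fold dvd_dict)
    fix p :: "'a poly"
    show "[:lead_coeff p:] * smult (inverse (lead_coeff p)) p = p"
      by (cases "p = 0") simp_all
  next
    fix p :: "'a poly" assume "is_unit p"
    then show "[:lead_coeff p:] = p"
      by (elim is_unit_polyE) (auto simp: monom_0 one_poly_def field_simps)
  next
    fix p :: "'a poly" assume "p \<noteq> 0"
    then show "is_unit [:lead_coeff p:]"
      by (simp add: is_unit_pCons_iff)
  next
    fix a b :: "'a poly" assume "is_unit a"
    thus "[:lead_coeff (a * b):] = a * [:lead_coeff b:]"
      by (auto elim!: is_unit_polyE)
  qed (auto simp: lead_coeff_mult Rings.div_mult_mod_eq intro!: degree_mod_less' degree_mult_right_le)
qed

lemma field_poly_dvd_moebius_prod:
  fixes F :: "nat \<Rightarrow> 'b::field poly"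
  assumes N: "N > 0" and nz: "\<And>n. n dvd N \<Longrightarrow> F n \<noteq> 0"
    and mono: "\<And>m n. m dvd N \<Longrightarrow> n dvd N \<Longrightarrow> m dvd n \<Longrightarrow> F m dvd F n"
    and gcdc: "\<And>x m n. x dvd F m \<Longrightarrow> x dvd F n \<Longrightarrow> x dvd F (gcd m n)"
  shows "(\<Prod>n\<in>{n. n dvd N \<and> moebius (N div n) = -1}. F n) dvd (\<Prod>n\<in>{n. n dvd N \<and> moebius (N div n) = 1}. F n)"
proof -
  define Sp where "Sp = {n. n dvd N \<and> moebius (N div n) = 1}"
  define Sm where "Sm = {n. n dvd N \<and> moebius (N div n) = -1}"
  have finp: "finite Sp" unfolding Sp_def using N by simp
  have finm: "finite Sm" unfolding Sm_def using N by simp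
  have nzp: "0 \<notin> F ` Sp" unfolding Sp_def using nz by auto
  have nzm: "0 \<notin> F ` Sm" unfolding Sm_def using nz by auto
  have B0: "(\<Prod>n\<in>Sm. F n) \<noteq> 0" using nzm finm by auto
  show ?thesis unfolding Sp_def[symmetric] Sm_def[symmetric]
  proof (rule fpoly.multiplicity_le_imp_dvd[OF B0])
    fix P :: "'b poly" assume P: "fpoly.prime P"
    hence Pe: "prime_elem P" by (rule fpoly.prime_imp_prime_elem)
    hence Pu: "\<not> is_unit P" by (simp add: prime_elem_def)
    define e where "e n = fpoly.multiplicity P (F n)" for n
    have mA: "fpoly.multiplicity P (\<Prod>n\<in>Sp. F n) = (\<Sum>n\<in>Sp. e n)"
      unfolding e_def prod_dict using fpoly.prime_elem_multiplicity_prod_distrib[OF Pe nzp finp] .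
    have mB: "fpoly.multiplicity P (\<Prod>n\<in>Sm. F n) = (\<Sum>n\<in>Sm. e n)"
      unfolding e_def prod_dict using fpoly.prime_elem_multiplicity_prod_distrib[OF Pe nzm finm] .
    have "(\<Sum>n | n dvd N. moebius (N div n) * int (e n)) \<ge> 0"
    proof (rule moebius_weighted_nonneg[OF N])
      fix m n assume "m dvd N" "n dvd N" "m dvd n"
      thus "e m \<le> e n" unfolding e_def using mono nz by (intro fpoly.dvd_imp_multiplicity_le) blast+
    next
      fix m n j assume mn: "m dvd N" "n dvd N" "j \<le> e m" "j \<le> e n"
      have pw: "\<And>k i. k dvd N \<Longrightarrow> (P ^ i dvd F k) = (i \<le> e k)"
        unfolding e_def power_dict by (rule fpoly.power_dvd_iff_le_multiplicity[OF nz Pu])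
      have "P ^ j dvd F m" using pw[OF mn(1)] mn(3) by blast
      moreover have "P ^ j dvd F n" using pw[OF mn(2)] mn(4) by blast
      ultimately have "P ^ j dvd F (gcd m n)" by (rule gcdc)
      moreover have "gcd m n dvd N" using dvd_trans[OF gcd_dvd1 mn(1)] .
      ultimately show "j \<le> e (gcd m n)" using pw by blast
    qed
    moreover have "(\<Sum>n | n dvd N. moebius (N div n) * int (e n)) = (\<Sum>n\<in>Sp. int (e n)) - (\<Sum>n\<in>Sm. int (e n))"
      using moebius_split_sum[OF N, of "\<lambda>n. int (e n)"] unfolding Sp_def Sm_def by simp
    ultimately have "int (\<Sum>n\<in>Sm. e n) \<le> int (\<Sum>n\<in>Sp. e n)" unfolding of_nat_sum by linarith
    hence "(\<Sum>n\<in>Sm. e n) \<le> (\<Sum>n\<in>Sp. e n)" by (simp only: of_nat_le_iff)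
    thus "fpoly.multiplicity P (\<Prod>n\<in>Sm. F n) \<le> fpoly.multiplicity P (\<Prod>n\<in>Sp. F n)"
      using mA mB by simp
  qed
qed

end


abbreviation phi :: "'a::field poly \<Rightarrow> 'a poly fract" where "phi c \<equiv> Fract c 1"

lemma phi_0 [simp]: "phi 0 = 0" by (simp add: fract_collapse)
lemma phi_1 [simp]: "phi 1 = 1" by (simp add: fract_collapse)
lemma phi_add: "phi (a + b) = phi a + phi b" by simp
lemma phi_mult: "phi (a * b) = phi a * phi b" by simp
lemma phi_eq0: "phi a = 0 \<longleftrightarrow> a = 0"
proof -
  have "phi a = phi 0 \<longleftrightarrow> a = 0" by (subst eq_fract(1)) simp_all
  thus ?thesis by (simp only: phi_0)
qed
lemma phi_inj: "phi a = phi b \<longleftrightarrow> a = b" by (simp add: eq_fract)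

lemma mp_add: "map_poly phi (p + q) = map_poly phi p + map_poly phi q"
  by (intro poly_eqI) (simp add: coeff_map_poly)
lemma mp_uminus: "map_poly phi (- p) = - map_poly phi p"
  by (intro poly_eqI) (simp add: coeff_map_poly)
lemma mp_diff: "map_poly phi (p - q) = map_poly phi p - map_poly phi q"
  by (intro poly_eqI) (simp add: coeff_map_poly)
lemma mp_smult: "map_poly phi (smult c p) = smult (phi c) (map_poly phi p)"
  by (rule map_poly_smult) auto
lemma mp_mult: "map_poly phi (p * q) = map_poly phi p * map_poly phi q"
proof (induction p)
  case 0 thus ?case by simp
next
  case (pCons a p)
  have "map_poly phi (pCons a p * q) = map_poly phi (smult a q + pCons 0 (p * q))" by simp
  also have "\<dots> = smult (phi a) (map_poly phi q) + pCons 0 (map_poly phi p * map_poly phi q)"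
    by (simp only: mp_add mp_smult map_poly_pCons[of phi, OF phi_0] phi_0 pCons.IH)
  also have "\<dots> = map_poly phi (pCons a p) * map_poly phi q"
    by (simp add: map_poly_pCons[of phi, OF phi_0])
  finally show ?case .
qed
lemma mp_power: "map_poly phi (p ^ n) = map_poly phi p ^ n"
  by (induction n) (simp_all add: mp_mult)
lemma mp_const: "map_poly phi [:c:] = [:phi c:]"
  by (simp add: map_poly_pCons[of phi, OF phi_0])
lemma mp_X: "map_poly phi [:0, 1:] = [:0, 1:]"
  by (simp add: map_poly_pCons[of phi, OF phi_0])
lemma mp_prod: "map_poly phi (\<Prod>n\<in>S. f n) = (\<Prod>n\<in>S. map_poly phi (f n))"
proof (induction S rule: infinite_finite_induct)
  case (infinite A) thus ?case by simp
next
  case empty thus ?case by simp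
next
  case (insert x F) thus ?case by (simp add: mp_mult)
qed

lemma mp_Gm_iter: "map_poly phi ((Gm d c ^^ n) [:0,1:]) = (Gm d (phi c) ^^ n) [:0,1:]"
  by (induction n) (simp_all add: Gm_def mp_add mp_power mp_const mp_X)

lemma mp_Fm: "map_poly phi (Fm d c n) = Fm d (phi c) n"
  unfolding Fm_def by (simp add: mp_diff mp_Gm_iter mp_X)

lemma poly_Gm_iter: "poly ((Gm d tK ^^ n) [:0,1:]) \<alpha> = (f_map d ^^ n) \<alpha>"
  by (induction n) (simp_all add: Gm_def f_map_def)

lemma poly_Fm: "poly (Fm d tK n) \<alpha> = (f_map d ^^ n) \<alpha> - \<alpha>"
  unfolding Fm_def by (simp add: poly_Gm_iter)

lemma tK_phi: "tK = phi tvar" unfolding tK_def ..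

lemma degree_mp: "degree (map_poly phi p) = degree p"
  by (rule degree_map_poly) (simp add: phi_eq0)

lemma transfer_dvd:
  fixes A B :: "'a::field poly poly"
  assumes mon: "lead_coeff B = 1" and dv: "map_poly phi B dvd map_poly phi A"
  shows "B dvd A"
proof -
  have B0: "B \<noteq> 0" using mon by auto
  define r where "r = pseudo_mod A B"
  obtain a q where aq: "a \<noteq> 0" "smult a A = B * q + r" using pseudo_mod(1)[OF B0] unfolding r_def by blast
  have rdeg: "r = 0 \<or> degree r < degree B" using pseudo_mod(2)[OF B0] unfolding r_def by blast
  have "map_poly phi (smult a A) = map_poly phi B * map_poly phi q + map_poly phi r"
    unfolding aq(2) by (simp add: mp_add mp_mult)
  hence "map_poly phi r = smult (phi a) (map_poly phi A) - map_poly phi B * map_poly phi q"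
    by (simp add: mp_smult algebra_simps)
  moreover have "map_poly phi B dvd smult (phi a) (map_poly phi A)" using dv by (simp add: dvd_smult)
  ultimately have "map_poly phi B dvd map_poly phi r" by (simp add: dvd_diff)
  have r0: "r = 0"
  proof (rule ccontr)
    assume "r \<noteq> 0"
    hence "map_poly phi r \<noteq> 0" by (simp add: map_poly_eq_0_iff phi_eq0)
    hence "degree (map_poly phi B) \<le> degree (map_poly phi r)"
      using \<open>map_poly phi B dvd map_poly phi r\<close> by (rule dvd_imp_degree_le[rotated])
    thus False using rdeg \<open>r \<noteq> 0\<close> by (simp add: degree_mp)
  qed
  have "B dvd smult a A" using aq r0 by simp
  thus ?thesis using dvd_monic[OF mon _ aq(1)] by blast
qed


lemma ac_root:
  assumes "alg_closed TYPE('a::field)" "degree (p::'a poly) > 0"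
  shows "\<exists>c. poly p c = 0"
  using assms unfolding alg_closed_def by blast

lemma linear_not_unit: "\<not> is_unit [:- c, 1::'a::field:]"
  by (subst is_unit_iff_degree) auto

lemma coprime_no_common_root:
  fixes p q :: "'a::field poly"
  assumes "coprime p q" "poly p c = 0" "poly q c = 0"
  shows False
proof -
  have "[:-c,1:] dvd p" "[:-c,1:] dvd q" using assms(2,3) by (simp_all add: poly_eq_0_iff_dvd)
  hence "is_unit [:-c,1:]" using assms(1) unfolding coprime_def by blast
  thus False using linear_not_unit by blast
qed

lemma no_common_root_coprime:
  fixes p q :: "'a::field poly"
  assumes ac: "alg_closed TYPE('a)" and q: "q \<noteq> 0" and nr: "\<And>c. poly q c = 0 \<Longrightarrow> poly p c \<noteq> 0"
  shows "coprime p q"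
  unfolding coprime_def
proof (intro allI impI)
  fix x assume xp: "x dvd p" and xq: "x dvd q"
  have x0: "x \<noteq> 0" using xq q by auto
  show "is_unit x"
  proof (rule ccontr)
    assume "\<not> is_unit x"
    hence "degree x > 0" using is_unit_iff_degree[OF x0] by simp
    then obtain c where c: "poly x c = 0" using ac_root[OF ac] by blast
    have "poly q c = 0" using c xq by (auto elim!: dvdE)
    moreover have "poly p c = 0" using c xp by (auto elim!: dvdE)
    ultimately show False using nr by blast
  qed
qed

lemma dvd_by_order:
  fixes q r :: "'a::field poly"
  assumes ac: "alg_closed TYPE('a)"
  shows "q \<noteq> 0 \<Longrightarrow> r \<noteq> 0 \<Longrightarrow> (\<And>c. order c q \<le> order c r) \<Longrightarrow> q dvd r"
proof (induction "degree q" arbitrary: q r rule: less_induct)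
  case less
  show ?case
  proof (cases "degree q = 0")
    case True
    hence "is_unit q" using is_unit_iff_degree[OF less.prems(1)] by simp
    thus ?thesis by (simp add: unit_imp_dvd)
  next
    case False
    then obtain c where c: "poly q c = 0" using ac_root[OF ac] by blast
    then obtain q1 where q1: "q = [:-c,1:] * q1" by (auto simp: poly_eq_0_iff_dvd elim: dvdE)
    have "order c q > 0" using c less.prems(1) by (simp add: order_gt_0_iff)
    hence "order c r > 0" using less.prems(3)[of c] by simp
    hence "poly r c = 0" using less.prems(2) by (simp add: order_gt_0_iff)
    then obtain r1 where r1: "r = [:-c,1:] * r1" by (auto simp: poly_eq_0_iff_dvd elim: dvdE)
    have q10: "q1 \<noteq> 0" "r1 \<noteq> 0" using q1 r1 less.prems by auto
    have "degree q = 1 + degree q1" unfolding q1 using q10 by (subst degree_mult_eq) auto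
    hence dq: "degree q1 < degree q" by simp
    have "\<And>x. order x q1 \<le> order x r1"
    proof -
      fix x
      have "order x q = order x [:-c,1:] + order x q1"
        using order_mult[of "[:-c,1:]" q1 x] less.prems(1) unfolding q1 by blast
      moreover have "order x r = order x [:-c,1:] + order x r1"
        using order_mult[of "[:-c,1:]" r1 x] less.prems(2) unfolding r1 by blast
      ultimately show "order x q1 \<le> order x r1" using less.prems(3)[of x] by simp
    qed
    hence "q1 dvd r1" using less.hyps[OF dq q10] by blast
    from mult_dvd_mono[OF dvd_refl[of "[:-c,1:]"] this] show ?thesis unfolding q1 r1 .
  qed
qed

lemma dvd_coprime_cancel:
  fixes U V s :: "'a::field poly"
  assumes ac: "alg_closed TYPE('a)" and V: "V \<noteq> 0"
    and nr: "\<And>c. poly s c = 0 \<Longrightarrow> poly V c \<noteq> 0" and dv: "V dvd U * s"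
  shows "V dvd U"
proof (cases "U = 0")
  case True thus ?thesis by simp
next
  case U: False
  show ?thesis
  proof (cases "s = 0")
    case True
    have "degree V = 0"
    proof (rule ccontr)
      assume "degree V \<noteq> 0"
      then obtain c where "poly V c = 0" using ac_root[OF ac] by blast
      thus False using nr[of c] True by simp
    qed
    hence "is_unit V" using is_unit_iff_degree[OF V] by simp
    thus ?thesis by (simp add: unit_imp_dvd)
  next
    case s: False
    show ?thesis
    proof (rule dvd_by_order[OF ac V U])
      fix c
      have "order c V \<le> order c (U * s)" using dv U s by (intro dvd_imp_order_le) auto
      also have "\<dots> = order c U + order c s" using U s by (intro order_mult) simp
      finally have le: "order c V \<le> order c U + order c s" .
      show "order c V \<le> order c U"
      proof (cases "order c V = 0")
        case False
        hence "poly V c = 0" using V by (simp add: order_gt_0_iff)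
        hence "poly s c \<noteq> 0" using nr by blast
        hence "order c s = 0" by (rule order_0I)
        thus ?thesis using le by simp
      qed simp
    qed
  qed
qed

lemma sum_orders_degree:
  fixes p :: "'a::field poly"
  assumes ac: "alg_closed TYPE('a)"
  shows "p \<noteq> 0 \<Longrightarrow> (\<Sum>c\<in>{c. poly p c = 0}. order c p) = degree p"
proof (induction "degree p" arbitrary: p rule: less_induct)
  case less
  show ?case
  proof (cases "degree p = 0")
    case True
    then obtain a where a: "p = [:a:]" by (rule degree_eq_zeroE)
    hence "a \<noteq> 0" using less.prems by simp
    hence "{c. poly p c = 0} = {}" using a by simp
    thus ?thesis using True by simp
  next
    case False
    then obtain c where c: "poly p c = 0" using ac_root[OF ac] by blast
    define k where "k = order c p"
    obtain r where r: "p = [:-c,1:]^k * r" "\<not> [:-c,1:] dvd r"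
      using order_decomp[OF less.prems] unfolding k_def by blast
    have r0: "r \<noteq> 0" using r less.prems by auto
    have rc: "poly r c \<noteq> 0" using r(2) by (simp add: poly_eq_0_iff_dvd)
    have "order c p > 0" using c less.prems by (simp add: order_gt_0_iff)
    hence kpos: "k > 0" unfolding k_def .
    have dp: "degree p = k + degree r" unfolding r(1) using r0 by (subst degree_mult_eq) (auto simp: degree_linear_power)
    hence dr: "degree r < degree p" using kpos by simp
    have roots: "{x. poly p x = 0} = insert c {x. poly r x = 0}"
      unfolding r(1) using kpos by (auto simp: poly_mult poly_power)
    have ordr: "\<And>x. x \<in> {x. poly r x = 0} \<Longrightarrow> order x p = order x r"
    proof -
      fix x assume x: "x \<in> {x. poly r x = 0}"
      hence xc: "x \<noteq> c" using rc by auto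
      have "order x p = order x ([:-c,1:]^k) + order x r" unfolding r(1) using r0 by (intro order_mult) simp
      moreover have "order x ([:-c,1:]^k) = 0" using xc by (intro order_0I) (simp add: poly_power)
      ultimately show "order x p = order x r" by simp
    qed
    have fin: "finite {x. poly r x = 0}" using r0 by (rule poly_roots_finite)
    have cn: "c \<notin> {x. poly r x = 0}" using rc by simp
    have "(\<Sum>x\<in>{x. poly p x = 0}. order x p) = order c p + (\<Sum>x\<in>{x. poly r x = 0}. order x p)"
      unfolding roots using fin cn by simp
    also have "(\<Sum>x\<in>{x. poly r x = 0}. order x p) = (\<Sum>x\<in>{x. poly r x = 0}. order x r)"
      using ordr by (rule sum.cong[OF refl])
    also have "\<dots> = degree r" using less.hyps[OF dr r0] .
    finally show ?thesis using dp unfolding k_def by simp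
  qed
qed


lemma monic_assoc_eq:
  fixes q q' :: "'a::field poly"
  assumes "lead_coeff q = 1" "lead_coeff q' = 1" "q dvd q'" "q' dvd q"
  shows "q = q'"
proof -
  have q0: "q \<noteq> 0" using assms by auto
  obtain k where k: "q' = q * k" using assms(3) by (auto elim: dvdE)
  obtain k' where k': "q = q' * k'" using assms(4) by (auto elim: dvdE)
  have "q * (k * k') = q * 1" unfolding mult.assoc[symmetric] k[symmetric] k'[symmetric] by simp
  hence "k * k' = 1" using q0 by (simp only: mult_cancel_left) simp
  hence "is_unit k" by (metis dvd_triv_left)
  have k0: "k \<noteq> 0" using \<open>k * k' = 1\<close> by auto
  hence "degree k = 0" using \<open>is_unit k\<close> is_unit_iff_degree by blast
  then obtain c where c: "k = [:c:]" by (rule degree_eq_zeroE)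
  have "lead_coeff q' = lead_coeff q * lead_coeff k" unfolding k by (rule lead_coeff_mult)
  hence "c = 1" using assms c by simp
  thus ?thesis using k c by simp
qed

lemma rquot_exists:
  assumes ac: "alg_closed TYPE('a::field)"
  shows "\<exists>p q. q \<noteq> 0 \<and> lead_coeff q = 1 \<and> coprime p q \<and> (g::'a ratfun) = Fract p q"
proof -
  obtain a b where ab: "g = Fract a b" "b \<noteq> 0" by (cases g) auto
  have "b \<noteq> 0 \<Longrightarrow> \<exists>p q. q \<noteq> 0 \<and> lead_coeff q = 1 \<and> coprime p q \<and> Fract a b = Fract p q"
  proof (induction "degree b" arbitrary: a b rule: less_induct)
    case less
    show ?case
    proof (cases "\<exists>c. poly a c = 0 \<and> poly b c = 0")
      case True
      then obtain c where c: "poly a c = 0" "poly b c = 0" by blast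
      obtain a1 where a1: "a = [:-c,1:] * a1" using c(1) by (auto simp: poly_eq_0_iff_dvd elim: dvdE)
      obtain b1 where b1: "b = [:-c,1:] * b1" using c(2) by (auto simp: poly_eq_0_iff_dvd elim: dvdE)
      have b10: "b1 \<noteq> 0" using b1 less.prems by auto
      have "degree b = 1 + degree b1" unfolding b1 using b10 by (subst degree_mult_eq) auto
      hence "degree b1 < degree b" by simp
      from less.hyps[OF this b10, of a1] obtain p q where
        pq: "q \<noteq> 0 \<and> lead_coeff q = 1 \<and> coprime p q \<and> Fract a1 b1 = Fract p q" by blast
      have "Fract a b = Fract a1 b1" unfolding a1 b1 by (rule mult_fract_cancel) simp
      thus ?thesis using pq by metis
    next
      case False
      define l where "l = inverse (lead_coeff b)"
      have l0: "l \<noteq> 0" unfolding l_def using less.prems by simp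
      define q where "q = smult l b"
      define p where "p = smult l a"
      have q0: "q \<noteq> 0" unfolding q_def using l0 less.prems by simp
      have lq: "lead_coeff q = 1" unfolding q_def l_def using less.prems by simp
      have "coprime p q"
      proof (rule no_common_root_coprime[OF ac q0])
        fix c assume "poly q c = 0"
        hence "poly b c = 0" unfolding q_def using l0 by simp
        hence "poly a c \<noteq> 0" using False by blast
        thus "poly p c \<noteq> 0" unfolding p_def using l0 by simp
      qed
      have sm: "\<And>x. smult l x = [:l:] * x" by simp
      have "Fract a b = Fract p q"
        unfolding p_def q_def sm
        by (rule mult_fract_cancel[symmetric]) (simp add: l0)
      with \<open>coprime p q\<close> show ?thesis using q0 lq by blast
    qed
  qed
  thus ?thesis using ab by metis
qed

lemma rquot_props:
  assumes ac: "alg_closed TYPE('a::field)"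
  shows "rden g \<noteq> 0 \<and> lead_coeff (rden g) = 1 \<and> coprime (rnum g) (rden g) \<and> (g::'a ratfun) = Fract (rnum g) (rden g)"
proof -
  have ex: "\<exists>x. (case x of (p, q) \<Rightarrow> q \<noteq> 0 \<and> lead_coeff q = 1 \<and> coprime p q \<and> g = Fract p q)"
    using rquot_exists[OF ac, of g] by auto
  have "case rquot g of (p, q) \<Rightarrow> q \<noteq> 0 \<and> lead_coeff q = 1 \<and> coprime p q \<and> g = Fract p q"
    unfolding rquot_def by (rule someI_ex[OF ex])
  thus ?thesis unfolding rnum_def rden_def by (cases "rquot g") auto
qed

lemma rquot_unique:
  assumes ac: "alg_closed TYPE('a::field)"
    and q: "q \<noteq> 0" "lead_coeff q = 1" and cp: "coprime p q" and g: "(g::'a ratfun) = Fract p q"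
  shows "rnum g = p \<and> rden g = q"
proof -
  define p' q' where "p' = rnum g" "q' = rden g"
  have P: "q' \<noteq> 0" "lead_coeff q' = 1" "coprime p' q'" "g = Fract p' q'"
    using rquot_props[OF ac, of g] unfolding p'_q'_def by auto
  have eq: "p * q' = p' * q" using g P(4) q(1) P(1) by (simp add: eq_fract)
  have "q dvd q' * p" using eq by (metis dvd_triv_right mult.commute)
  hence d1: "q dvd q'"
    using dvd_coprime_cancel[OF ac q(1)] coprime_no_common_root[OF cp] by blast
  have "q' dvd q * p'" using eq by (metis dvd_triv_left mult.commute)
  hence d2: "q' dvd q"
    using dvd_coprime_cancel[OF ac P(1)] coprime_no_common_root[OF P(3)] by blast
  have qq: "q = q'" using monic_assoc_eq[OF q(2) P(2) d1 d2] .
  hence "p = p'" using eq q(1) by simp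
  thus ?thesis using qq unfolding p'_q'_def by simp
qed


primrec Pn :: "nat \<Rightarrow> 'a::field poly \<Rightarrow> 'a poly \<Rightarrow> nat \<Rightarrow> 'a poly" where
  "Pn d p q 0 = p"
| "Pn d p q (Suc n) = Pn d p q n ^ d + tvar * q ^ (d ^ Suc n)"

lemma Fract_power: "Fract x y ^ n = Fract (x ^ n) (y ^ n)"
  by (induction n) (simp_all add: fract_collapse)

lemma fiter:
  assumes q: "q \<noteq> 0"
  shows "(f_map d ^^ n) (Fract p q) = Fract (Pn d p q n) (q ^ (d ^ n))"
proof (induction n)
  case 0 thus ?case by simp
next
  case (Suc n)
  have qn: "q ^ (d ^ n) \<noteq> 0" using q by simp
  have "(f_map d ^^ Suc n) (Fract p q) = f_map d (Fract (Pn d p q n) (q ^ (d ^ n)))"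
    using Suc by simp
  also have "\<dots> = Fract (Pn d p q n) (q ^ (d ^ n)) ^ d + Fract tvar 1"
    by (simp add: f_map_def tK_def)
  also have "\<dots> = Fract (Pn d p q n ^ d) ((q ^ (d ^ n)) ^ d) + Fract tvar 1" by (simp add: Fract_power)
  also have "\<dots> = Fract (Pn d p q n ^ d * 1 + tvar * (q ^ (d ^ n)) ^ d) ((q ^ (d ^ n)) ^ d * 1)"
    using qn by simp
  also have "(q ^ (d ^ n)) ^ d = q ^ (d ^ Suc n)" by (simp add: power_mult[symmetric] mult.commute)
  finally show ?case by simp
qed

lemma Pn_root:
  assumes nr: "poly p c \<noteq> 0" and qc: "poly q c = 0" and d: "d \<ge> 1"
  shows "poly (Pn d p q n) c \<noteq> 0"
proof (induction n)
  case 0 thus ?case using nr by simp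
next
  case (Suc n)
  have "d ^ Suc n > 0" using d by simp
  thus ?case using Suc qc by (simp add: poly_power zero_power)
qed

lemma tvar_nz [simp]: "tvar \<noteq> (0::'a::field poly)" by (simp add: tvar_def)
lemma degree_tvar [simp]: "degree (tvar::'a::field poly) = 1" by (simp add: tvar_def)
lemma poly_tvar [simp]: "poly tvar c = c" by (simp add: tvar_def)

lemma degree_tq:
  fixes q :: "'a::field poly"
  assumes "q \<noteq> 0" shows "degree (tvar * q ^ k) = 1 + k * degree q"
  using assms by (simp add: degree_mult_eq degree_power_eq)

lemma Pn_deg_A:
  fixes p q :: "'a::field poly"
  assumes q: "q \<noteq> 0" and ab: "degree p > degree q" and d: "d \<ge> 2"
  shows "degree (Pn d p q n) = degree p * d ^ n"
proof (induction n)
  case 0 thus ?case by simp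
next
  case (Suc n)
  have p0: "p \<noteq> 0" using ab by auto
  have "degree p > 0" using ab by simp
  hence "degree (Pn d p q n) > 0" using Suc d by simp
  hence P0: "Pn d p q n \<noteq> 0" by auto
  define D where "D = d ^ Suc n"
  have "d ^ 1 \<le> d ^ Suc n" using d by (intro power_increasing) auto
  hence D2: "D \<ge> 2" unfolding D_def using d by (simp only: power_one_right)
  have dP: "degree (Pn d p q n ^ d) = degree p * D" unfolding D_def using P0 Suc
    by (simp add: degree_power_eq)
  have "(degree q + 1) * D \<le> degree p * D" using ab by (intro mult_le_mono1) simp
  hence "degree q * D + D \<le> degree p * D" by (simp add: algebra_simps)
  hence lt: "degree (tvar * q ^ D) < degree (Pn d p q n ^ d)" using degree_tq[OF q, of D] dP D2 by (simp add: mult.commute)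
  have "degree (Pn d p q (Suc n)) = degree (Pn d p q n ^ d)"
    unfolding Pn.simps D_def[symmetric] using lt by (rule degree_add_eq_left)
  thus ?case using dP unfolding D_def by simp
qed

lemma Pn_deg_B:
  fixes p q :: "'a::field poly"
  assumes q: "q \<noteq> 0" and ab: "degree p \<le> degree q" and d: "d \<ge> 2"
  shows "degree (Pn d p q (Suc m)) = (degree q * d + 1) * d ^ m"
proof (induction m)
  case 0
  have "degree (p ^ d) \<le> d * degree p" using degree_power_le[of p d] by (simp add: mult.commute)
  also have "\<dots> \<le> d * degree q" using ab by simp
  finally have "degree (p ^ d) < degree (tvar * q ^ (d ^ Suc 0))" using degree_tq[OF q, of "d ^ Suc 0"] by simp
  hence "degree (Pn d p q (Suc 0)) = degree (tvar * q ^ (d ^ Suc 0))"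
    unfolding Pn.simps by (rule degree_add_eq_right)
  thus ?case using degree_tq[OF q, of "d ^ Suc 0"] by simp
next
  case (Suc m)
  define X where "X = (degree q * d + 1) * d ^ m"
  have Xpos: "X > 0" unfolding X_def using d by simp
  have P0: "Pn d p q (Suc m) \<noteq> 0" using Suc Xpos unfolding X_def by auto
  have dP: "degree (Pn d p q (Suc m) ^ d) = d * X" using P0 Suc unfolding X_def by (simp add: degree_power_eq)
  have "d ^ 1 \<le> d ^ Suc m" using d by (intro power_increasing) auto
  hence D2: "d ^ Suc m \<ge> 2" using d by (simp only: power_one_right)
  have dX: "d * X = degree q * d ^ Suc (Suc m) + d ^ Suc m" unfolding X_def by (simp add: algebra_simps)
  have "degree (tvar * q ^ (d ^ Suc (Suc m))) = 1 + degree q * d ^ Suc (Suc m)"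
    using degree_tq[OF q] by (simp add: mult.commute)
  hence lt: "degree (tvar * q ^ (d ^ Suc (Suc m))) < degree (Pn d p q (Suc m) ^ d)"
    using dP dX D2 by simp
  have "degree (Pn d p q (Suc (Suc m))) = degree (Pn d p q (Suc m) ^ d)"
    unfolding Pn.simps(2)[of d p q "Suc m"] using lt by (rule degree_add_eq_left)
  thus ?case using dP unfolding X_def by (simp add: algebra_simps)
qed


locale redfrac =
  fixes p q :: "'a::field_char_0 poly" and d :: nat
  assumes ac: "alg_closed TYPE('a)" and q0: "q \<noteq> 0" and qm: "lead_coeff q = 1"
    and cp: "coprime p q" and d2: "d \<ge> 2"
begin

lemma nr: "poly q c = 0 \<Longrightarrow> poly p c \<noteq> 0"
  using coprime_no_common_root[OF cp] by blast

lemma ht_iter: "ht ((f_map d ^^ n) (Fract p q)) = max (degree (Pn d p q n)) (degree q * d ^ n)"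
proof -
  have Q0: "q ^ (d ^ n) \<noteq> 0" using q0 by simp
  have Qm: "lead_coeff (q ^ (d ^ n)) = 1" using qm by (simp add: lead_coeff_power)
  have cpn: "coprime (Pn d p q n) (q ^ (d ^ n))"
  proof (rule no_common_root_coprime[OF ac Q0])
    fix c assume "poly (q ^ (d ^ n)) c = 0"
    hence qc: "poly q c = 0" by (simp add: poly_power)
    show "poly (Pn d p q n) c \<noteq> 0" using Pn_root[OF nr[OF qc] qc] d2 by simp
  qed
  have "rnum ((f_map d ^^ n) (Fract p q)) = Pn d p q n \<and> rden ((f_map d ^^ n) (Fract p q)) = q ^ (d ^ n)"
    using rquot_unique[OF ac Q0 Qm cpn fiter[OF q0]] .
  thus ?thesis unfolding ht_def using q0 by (simp add: degree_power_eq mult.commute)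
qed

lemma canon_A:
  assumes ab: "degree p > degree q"
  shows "canon_ht d (Fract p q) = real (degree p)"
proof -
  have "\<And>n. real (ht ((f_map d ^^ n) (Fract p q))) / real d ^ n = real (degree p)"
  proof -
    fix n
    have "degree q * d ^ n \<le> degree p * d ^ n" using ab by simp
    hence "ht ((f_map d ^^ n) (Fract p q)) = degree p * d ^ n"
      unfolding ht_iter Pn_deg_A[OF q0 ab d2] by simp
    thus "real (ht ((f_map d ^^ n) (Fract p q))) / real d ^ n = real (degree p)" using d2 by simp
  qed
  thus ?thesis unfolding canon_ht_def by simp
qed

lemma canon_B:
  assumes ab: "degree p \<le> degree q"
  shows "canon_ht d (Fract p q) = (real (degree q) * real d + 1) / real d"
proof -
  define X where "X = (\<lambda>n. real (ht ((f_map d ^^ n) (Fract p q))) / real d ^ n)"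
  have "\<And>m. X (Suc m) = (real (degree q) * real d + 1) / real d"
  proof -
    fix m
    have "degree q * d ^ Suc m \<le> (degree q * d + 1) * d ^ m" by (simp add: algebra_simps)
    hence "ht ((f_map d ^^ Suc m) (Fract p q)) = (degree q * d + 1) * d ^ m"
      unfolding ht_iter Pn_deg_B[OF q0 ab d2] by simp
    hence "X (Suc m) = real ((degree q * d + 1) * d ^ m) / real d ^ Suc m" unfolding X_def by simp
    also have "\<dots> = (real (degree q) * real d + 1) / real d" using d2 by (simp add: field_simps)
    finally show "X (Suc m) = (real (degree q) * real d + 1) / real d" .
  qed
  hence "(\<lambda>m. X (Suc m)) \<longlonglongrightarrow> (real (degree q) * real d + 1) / real d" by simp
  hence "X \<longlonglongrightarrow> (real (degree q) * real d + 1) / real d" by (rule LIMSEQ_imp_Suc)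
  hence "lim X = (real (degree q) * real d + 1) / real d" by (rule limI)
  thus ?thesis unfolding canon_ht_def X_def .
qed

end


lemma phi_X_tK: "phi [:0, 1:] = (tK :: 'a::field ratfun)" by (simp add: tK_def tvar_def)

lemma dyn_identity:
  fixes \<alpha> :: "'a::field ratfun"
  assumes d: "d \<ge> 2" and N: "N > 0"
  shows "dyn_eval d N \<alpha> * (\<Prod>n\<in>{n. n dvd N \<and> moebius (N div n) = -1}. (f_map d ^^ n) \<alpha> - \<alpha>)
       = (\<Prod>n\<in>{n. n dvd N \<and> moebius (N div n) = 1}. (f_map d ^^ n) \<alpha> - \<alpha>)"
proof -
  define Sp where "Sp = {n. n dvd N \<and> moebius (N div n) = 1}"
  define Sm where "Sm = {n. n dvd N \<and> moebius (N div n) = -1}"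
  define Az :: "'a poly poly" where "Az = (\<Prod>n\<in>Sp. iter_minus_z d n)"
  define Bz :: "'a poly poly" where "Bz = (\<Prod>n\<in>Sm. iter_minus_z d n)"
  have pos: "\<And>n. n dvd N \<Longrightarrow> n \<ge> 1" using N by (auto intro: Nat.gr0I)
  have mapF: "\<And>S. map_poly phi (\<Prod>n\<in>S. iter_minus_z d n) = (\<Prod>n\<in>S. Fm d (tK::'a ratfun) n)"
    by (simp add: mp_prod iter_minus_z_Fm mp_Fm phi_X_tK)
  have lB: "lead_coeff Bz = 1" unfolding Bz_def lead_coeff_prod iter_minus_z_Fm
    using Fm_deg(2)[OF d] pos unfolding Sm_def by (intro prod.neutral) auto
  have "(\<Prod>n\<in>Sm. Fm d (tK::'a ratfun) n) dvd (\<Prod>n\<in>Sp. Fm d (tK::'a ratfun) n)"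
    unfolding Sp_def Sm_def
  proof (rule field_poly_dvd_moebius_prod[OF N])
    fix n assume "n dvd N" thus "Fm d (tK::'a ratfun) n \<noteq> 0" using Fm_deg(3)[OF d] pos by blast
  next
    fix m n :: nat assume "m dvd n" thus "Fm d (tK::'a ratfun) m dvd Fm d tK n" by (rule Fm_dvd)
  next
    fix x and m n :: nat assume "x dvd Fm d (tK::'a ratfun) m" "x dvd Fm d tK n"
    thus "x dvd Fm d tK (gcd m n)" by (rule Fm_common_dvd_gcd)
  qed
  hence "map_poly phi Bz dvd map_poly phi Az" unfolding Az_def Bz_def mapF .
  hence BA: "Bz dvd Az" by (rule transfer_dvd[OF lB])
  have "dynatomic d N * Bz = Az" unfolding dynatomic_def Sp_def[symmetric] Sm_def[symmetric]
    Az_def[symmetric] Bz_def[symmetric] using BA by simp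
  hence "poly (map_poly phi (dynatomic d N * Bz)) \<alpha> = poly (map_poly phi Az) \<alpha>" by simp
  hence "dyn_eval d N \<alpha> * poly (map_poly phi Bz) \<alpha> = poly (map_poly phi Az) \<alpha>"
    unfolding dyn_eval_def mp_mult poly_mult .
  moreover have "\<And>S. poly (map_poly phi (\<Prod>n\<in>S. iter_minus_z d n)) \<alpha> = (\<Prod>n\<in>S. (f_map d ^^ n) \<alpha> - \<alpha>)"
    unfolding mapF poly_prod poly_Fm ..
  ultimately show ?thesis unfolding Az_def Bz_def Sp_def Sm_def by simp
qed


lemma poly_clear:
  fixes \<Phi> :: "'a::field poly poly"
  assumes q: "q \<noteq> 0"
  shows "E \<ge> degree \<Phi> \<Longrightarrow> \<exists>W. poly (map_poly phi \<Phi>) (Fract p q) = Fract W (q ^ E)"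
proof (induction \<Phi> arbitrary: E)
  case 0 show ?case by (rule exI[of _ 0]) (simp add: fract_collapse)
next
  case (pCons c \<Phi>)
  show ?case
  proof (cases "\<Phi> = 0")
    case True
    have "poly (map_poly phi (pCons c \<Phi>)) (Fract p q) = Fract c 1"
      using True by (simp add: map_poly_pCons[of phi, OF phi_0])
    also have "\<dots> = Fract (c * q ^ E) (q ^ E)" using q by (simp add: eq_fract)
    finally show ?thesis by blast
  next
    case False
    hence "degree (pCons c \<Phi>) = Suc (degree \<Phi>)" by simp
    then obtain E' where E': "E = Suc E'" "E' \<ge> degree \<Phi>" using pCons.prems by (cases E) auto
    obtain W where W: "poly (map_poly phi \<Phi>) (Fract p q) = Fract W (q ^ E')" using pCons.IH[OF E'(2)] by blast
    have "poly (map_poly phi (pCons c \<Phi>)) (Fract p q) = Fract c 1 + Fract p q * Fract W (q ^ E')"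
      by (simp add: map_poly_pCons[of phi, OF phi_0] W)
    also have "\<dots> = Fract (c * q ^ E + p * W) (q ^ E)" using q by (simp add: E' algebra_simps)
    finally show ?thesis by blast
  qed
qed

lemma prod_fract: "finite S \<Longrightarrow> (\<Prod>n\<in>S. Fract (g n) (h n)) = Fract (\<Prod>n\<in>S. g n) (\<Prod>n\<in>S. h n)"
  by (induction S rule: finite_induct) (simp_all add: fract_collapse)

context redfrac
begin

definition Rn :: "nat \<Rightarrow> 'a poly" where "Rn n = Pn d p q n - p * q ^ (d ^ n - 1)"

lemma dn_ge: "n \<ge> 1 \<Longrightarrow> d ^ n \<ge> 2"
proof -
  assume "n \<ge> 1"
  hence "d ^ 1 \<le> d ^ n" using d2 by (intro power_increasing) auto
  thus ?thesis using d2 by simp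
qed

lemma diff_iter: "n \<ge> 1 \<Longrightarrow> (f_map d ^^ n) (Fract p q) - Fract p q = Fract (Rn n) (q ^ (d ^ n))"
proof -
  assume n: "n \<ge> 1"
  have qq: "q ^ (d ^ n) = q * q ^ (d ^ n - 1)" using dn_ge[OF n] by (metis Suc_diff_1 power_Suc less_le_trans pos2 zero_less_Suc)
  have "(f_map d ^^ n) (Fract p q) - Fract p q = Fract (Pn d p q n * q - p * q ^ (d ^ n)) (q ^ (d ^ n) * q)"
    using q0 by (simp add: fiter[OF q0])
  also have "Pn d p q n * q - p * q ^ (d ^ n) = q * Rn n" unfolding Rn_def qq by (simp add: algebra_simps)
  also have "q ^ (d ^ n) * q = q * q ^ (d ^ n)" by simp
  also have "Fract (q * Rn n) (q * q ^ (d ^ n)) = Fract (Rn n) (q ^ (d ^ n))" using q0 by (rule mult_fract_cancel)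
  finally show ?thesis .
qed

lemma Rn_root: "n \<ge> 1 \<Longrightarrow> poly q c = 0 \<Longrightarrow> poly (Rn n) c \<noteq> 0"
proof -
  assume n: "n \<ge> 1" and qc: "poly q c = 0"
  have "d ^ n - 1 > 0" using dn_ge[OF n] by simp
  hence "poly (q ^ (d ^ n - 1)) c = 0" using qc by (simp add: poly_power zero_power)
  hence "poly (Rn n) c = poly (Pn d p q n) c" unfolding Rn_def by simp
  thus ?thesis using Pn_root[OF nr[OF qc] qc, of d n] d2 by simp
qed

lemma degree_diff_left: "degree (y::'a poly) < degree x \<Longrightarrow> degree (x - y) = degree x"
  using degree_add_eq_left[of "-y" x] by simp

lemma Rn_deg_A:
  assumes ab: "degree p > degree q" and n: "n \<ge> 1"
  shows "degree (Rn n) = degree p * d ^ n"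
proof -
  define k where "k = d ^ n - 1"
  have k1: "k \<ge> 1" unfolding k_def using dn_ge[OF n] by simp
  have dk: "d ^ n = k + 1" unfolding k_def using dn_ge[OF n] by simp
  have p0: "p \<noteq> 0" using ab by auto
  have "degree (p * q ^ k) = degree p + k * degree q" using p0 q0 by (simp add: degree_mult_eq degree_power_eq)
  also have "\<dots> < degree p + k * degree p" using k1 ab by simp
  also have "\<dots> = degree p * d ^ n" unfolding dk by (simp add: algebra_simps)
  finally have lt: "degree (p * q ^ k) < degree (Pn d p q n)" unfolding Pn_deg_A[OF q0 ab d2] .
  show ?thesis unfolding Rn_def k_def[symmetric] using degree_diff_left[OF lt] Pn_deg_A[OF q0 ab d2] by simp
qed

lemma Rn_deg_B:
  assumes ab: "degree p \<le> degree q"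
  shows "degree (Rn (Suc m)) = degree q * d ^ Suc m + d ^ m"
proof -
  define k where "k = d ^ Suc m - 1"
  have dk: "d ^ Suc m = k + 1" unfolding k_def using dn_ge[of "Suc m"] by simp
  have "degree (p * q ^ k) \<le> degree p + degree (q ^ k)" by (rule degree_mult_le)
  also have "degree (q ^ k) \<le> k * degree q" using degree_power_le[of q k] by (simp add: mult.commute)
  hence "degree p + degree (q ^ k) \<le> degree q + k * degree q" using ab by simp
  also have "degree q + k * degree q = degree q * d ^ Suc m" unfolding dk by (simp add: algebra_simps)
  finally have le: "degree (p * q ^ k) \<le> degree q * d ^ Suc m" by simp
  have dP: "degree (Pn d p q (Suc m)) = degree q * d ^ Suc m + d ^ m"
    unfolding Pn_deg_B[OF q0 ab d2] by (simp add: algebra_simps)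
  have "d ^ m > 0" using d2 by simp
  hence "degree (p * q ^ k) < degree q * d ^ Suc m + d ^ m" using le by linarith
  hence lt: "degree (p * q ^ k) < degree (Pn d p q (Suc m))" unfolding dP .
  show ?thesis unfolding Rn_def k_def[symmetric] using degree_diff_left[OF lt] dP by simp
qed

lemma Rn_nz: "n \<ge> 1 \<Longrightarrow> Rn n \<noteq> 0"
proof -
  assume n: "n \<ge> 1"
  show ?thesis
  proof (cases "degree p > degree q")
    case True
    hence "degree (Rn n) > 0" using Rn_deg_A[OF True n] d2 by simp
    thus ?thesis by auto
  next
    case False
    obtain m where m: "n = Suc m" using n by (cases n) auto
    have "degree (Rn n) > 0" unfolding m using Rn_deg_B[of m] False d2 by simp
    thus ?thesis by auto
  qed
qed

end


lemma Fract_eq0: "(b::'b::idom) \<noteq> 0 \<Longrightarrow> Fract a b = 0 \<longleftrightarrow> a = 0"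
proof -
  assume b: "b \<noteq> 0"
  have "Fract a b = Fract 0 1 \<longleftrightarrow> a * 1 = 0 * b" by (rule eq_fract(1)) (use b in auto)
  thus ?thesis by (simp only: fract_collapse) simp
qed

context redfrac
begin

lemma final_from_reduced:
  assumes N: "N > 0"
    and rn: "rnum g = W" and rd: "rden g = q ^ Dn" and W0: "W \<noteq> 0"
    and gt: "degree W > Dn * degree q"
    and hh: "real (degree W) = H"
    and gnz: "g \<noteq> 0"
  shows "g \<noteq> 0 \<and> v_inf g < 0 \<and> real (ht g) = H
       \<and> real_of_int (\<Sum>c \<in> {c. v_fin c g > 0}. v_fin c g) = H"
proof -
  have dq: "degree (q ^ Dn) = Dn * degree q" using q0 by (simp add: degree_power_eq)
  have htg: "ht g = degree W" unfolding ht_def rn rd dq using gt by simp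
  have "int (Dn * degree q) < int (degree W)" using gt by (simp only: of_nat_less_iff)
  hence vi: "v_inf g < 0" unfolding v_inf_def rn rd dq by simp
  have cpW: "coprime W (q ^ Dn)" using rquot_props[OF ac, of g] unfolding rn rd by blast
  have vf: "\<And>c. v_fin c g = int (order c W) - int (order c (q ^ Dn))" unfolding v_fin_def rn rd ..
  have set: "{c. v_fin c g > 0} = {c. poly W c = 0}"
  proof (intro set_eqI iffI)
    fix c assume "c \<in> {c. v_fin c g > 0}"
    hence "order c W > 0" unfolding vf by simp
    thus "c \<in> {c. poly W c = 0}" using W0 by (simp add: order_gt_0_iff)
  next
    fix c assume "c \<in> {c. poly W c = 0}"
    hence Wc: "poly W c = 0" by simp
    hence "poly (q ^ Dn) c \<noteq> 0" using coprime_no_common_root[OF cpW] by blast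
    hence "order c (q ^ Dn) = 0" by (rule order_0I)
    moreover have "order c W > 0" using Wc W0 by (simp add: order_gt_0_iff)
    ultimately show "c \<in> {c. v_fin c g > 0}" unfolding vf by simp
  qed
  have "(\<Sum>c \<in> {c. v_fin c g > 0}. v_fin c g) = (\<Sum>c \<in> {c. poly W c = 0}. int (order c W))"
    unfolding set
  proof (rule sum.cong[OF refl])
    fix c assume "c \<in> {c. poly W c = 0}"
    hence "poly (q ^ Dn) c \<noteq> 0" using coprime_no_common_root[OF cpW] by blast
    hence "order c (q ^ Dn) = 0" by (rule order_0I)
    thus "v_fin c g = int (order c W)" unfolding vf by simp
  qed
  also have "\<dots> = int (degree W)" unfolding of_nat_sum[symmetric] using sum_orders_degree[OF ac W0] by simp
  finally have sz: "(\<Sum>c \<in> {c. v_fin c g > 0}. v_fin c g) = int (degree W)" .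
  show ?thesis using gnz vi htg hh sz by simp
qed

lemma reduce:
  assumes N: "N > 0"
  defines "g \<equiv> dyn_eval d N (Fract p q)"
  shows "\<exists>W. rnum g = W \<and> rden g = q ^ nat (Ddeg d N) \<and> W \<noteq> 0 \<and> g \<noteq> 0 \<and>
     int (degree W) = (\<Sum>n | n dvd N. moebius (N div n) * int (degree (Rn n)))"
proof -
  define \<alpha> where "\<alpha> = Fract p q"
  define Sp where "Sp = {n. n dvd N \<and> moebius (N div n) = 1}"
  define Sm where "Sm = {n. n dvd N \<and> moebius (N div n) = -1}"
  have finp: "finite Sp" unfolding Sp_def using N by simp
  have finm: "finite Sm" unfolding Sm_def using N by simp
  have posp: "\<And>n. n \<in> Sp \<Longrightarrow> n \<ge> 1" unfolding Sp_def using N by (auto intro: Nat.gr0I)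
  have posm: "\<And>n. n \<in> Sm \<Longrightarrow> n \<ge> 1" unfolding Sm_def using N by (auto intro: Nat.gr0I)
  have prodS: "\<And>S. finite S \<Longrightarrow> (\<And>n. n \<in> S \<Longrightarrow> n \<ge> 1) \<Longrightarrow>
      (\<Prod>n\<in>S. (f_map d ^^ n) \<alpha> - \<alpha>) = Fract (\<Prod>n\<in>S. Rn n) (q ^ (\<Sum>n\<in>S. d ^ n))"
  proof -
    fix S :: "nat set" assume fS: "finite S" and pS: "\<And>n. n \<in> S \<Longrightarrow> n \<ge> 1"
    have "(\<Prod>n\<in>S. (f_map d ^^ n) \<alpha> - \<alpha>) = (\<Prod>n\<in>S. Fract (Rn n) (q ^ (d ^ n)))"
      unfolding \<alpha>_def using pS diff_iter by (intro prod.cong) auto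
    also have "\<dots> = Fract (\<Prod>n\<in>S. Rn n) (\<Prod>n\<in>S. q ^ (d ^ n))" using fS by (rule prod_fract)
    also have "(\<Prod>n\<in>S. q ^ (d ^ n)) = q ^ (\<Sum>n\<in>S. d ^ n)" by (simp add: power_sum)
    finally show "(\<Prod>n\<in>S. (f_map d ^^ n) \<alpha> - \<alpha>) = Fract (\<Prod>n\<in>S. Rn n) (q ^ (\<Sum>n\<in>S. d ^ n))" .
  qed
  define U where "U = (\<Prod>n\<in>Sp. Rn n)"
  define V where "V = (\<Prod>n\<in>Sm. Rn n)"
  define ep where "ep = (\<Sum>n\<in>Sp. d ^ n)"
  define em where "em = (\<Sum>n\<in>Sm. d ^ n)"
  have id: "g * Fract V (q ^ em) = Fract U (q ^ ep)"
    using dyn_identity[OF d2 N, of \<alpha>] prodS[OF finp posp] prodS[OF finm posm]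
    unfolding g_def \<alpha>_def[symmetric] U_def V_def ep_def em_def Sp_def[symmetric] Sm_def[symmetric] by simp
  have V0: "V \<noteq> 0" unfolding V_def using finm posm Rn_nz by auto
  have U0: "U \<noteq> 0" unfolding U_def using finp posp Rn_nz by auto
  have Dsplit: "Ddeg d N = int ep - int em"
    using moebius_split_sum[OF N, of "\<lambda>n. int d ^ n"] unfolding Ddeg_def ep_def em_def Sp_def Sm_def
    by simp
  have Dpos: "Ddeg d N > 0" using Ddeg_pos[OF d2 N] .
  define Dn where "Dn = nat (Ddeg d N)"
  have epD: "ep = em + Dn" unfolding Dn_def using Dsplit Dpos by linarith
  have X0: "Fract V (q ^ em) \<noteq> 0"
  proof
    assume "Fract V (q ^ em) = 0"
    hence "V = 0" using q0 by (simp add: Fract_eq0)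
    thus False using V0 by simp
  qed
  have "g = Fract U (q ^ ep) / Fract V (q ^ em)" using id X0 by (metis nonzero_mult_div_cancel_right)
  also have "\<dots> = Fract (q ^ em * U) (q ^ em * (q ^ Dn * V))"
    unfolding epD by (simp add: power_add algebra_simps)
  also have "\<dots> = Fract U (q ^ Dn * V)" using q0 by (intro mult_fract_cancel) simp
  finally have gU: "g = Fract U (q ^ Dn * V)" .
  define \<Phi> :: "'a poly poly" where "\<Phi> = dynatomic d N"
  have "\<exists>W. poly (map_poly phi \<Phi>) (Fract p q) = Fract W (q ^ degree \<Phi>)"
    by (rule poly_clear[OF q0]) simp
  then obtain W where W0: "poly (map_poly phi \<Phi>) (Fract p q) = Fract W (q ^ degree \<Phi>)"
    by blast
  have W: "g = Fract W (q ^ degree \<Phi>)" unfolding g_def dyn_eval_def using W0 unfolding \<Phi>_def .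
  have "U * q ^ degree \<Phi> = W * (q ^ Dn * V)" using gU W q0 V0 by (simp add: eq_fract)
  hence "U * q ^ degree \<Phi> = (W * q ^ Dn) * V" by (simp add: mult.assoc)
  hence "V dvd U * q ^ degree \<Phi>" by simp
  moreover have "\<And>c. poly (q ^ degree \<Phi>) c = 0 \<Longrightarrow> poly V c \<noteq> 0"
  proof -
    fix c assume "poly (q ^ degree \<Phi>) c = 0"
    hence qc: "poly q c = 0" by (simp add: poly_power)
    show "poly V c \<noteq> 0" unfolding V_def poly_prod using finm posm Rn_root[OF _ qc] by auto
  qed
  ultimately have VU: "V dvd U" using dvd_coprime_cancel[OF ac V0] by blast
  define Wn where "Wn = U div V"
  have UW: "U = Wn * V" unfolding Wn_def using VU by simp
  have Wn0: "Wn \<noteq> 0" using U0 UW by auto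
  have "g = Fract (V * Wn) (V * q ^ Dn)" unfolding gU UW by (simp add: mult.commute)
  also have "\<dots> = Fract Wn (q ^ Dn)" using V0 by (rule mult_fract_cancel)
  finally have gW: "g = Fract Wn (q ^ Dn)" .
  have QD0: "q ^ Dn \<noteq> 0" using q0 by simp
  have QDm: "lead_coeff (q ^ Dn) = 1" using qm by (simp add: lead_coeff_power)
  have cpW: "coprime Wn (q ^ Dn)"
  proof (rule no_common_root_coprime[OF ac QD0])
    fix c assume "poly (q ^ Dn) c = 0"
    hence qc: "poly q c = 0" by (simp add: poly_power)
    have "poly U c \<noteq> 0" unfolding U_def poly_prod using finp posp Rn_root[OF _ qc] by auto
    thus "poly Wn c \<noteq> 0" unfolding UW by simp
  qed
  have rr: "rnum g = Wn \<and> rden g = q ^ Dn" using rquot_unique[OF ac QD0 QDm cpW gW] .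
  have gnz: "g \<noteq> 0"
  proof
    assume "g = 0"
    hence "Wn = 0" using QD0 gW by (simp add: Fract_eq0)
    thus False using Wn0 by simp
  qed
  have "degree U = degree Wn + degree V" unfolding UW using Wn0 V0 by (rule degree_mult_eq)
  moreover have "degree U = (\<Sum>n\<in>Sp. degree (Rn n))" unfolding U_def
    using posp Rn_nz by (intro degree_prod_eq_sum_degree) auto
  moreover have "degree V = (\<Sum>n\<in>Sm. degree (Rn n))" unfolding V_def
    using posm Rn_nz by (intro degree_prod_eq_sum_degree) auto
  ultimately have "int (degree Wn) = int (\<Sum>n\<in>Sp. degree (Rn n)) - int (\<Sum>n\<in>Sm. degree (Rn n))"
    by simp
  hence "int (degree Wn) = (\<Sum>n\<in>Sp. int (degree (Rn n))) - (\<Sum>n\<in>Sm. int (degree (Rn n)))"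
    by (simp only: of_nat_sum)
  also have "\<dots> = (\<Sum>n | n dvd N. moebius (N div n) * int (degree (Rn n)))"
    using moebius_split_sum[OF N, of "\<lambda>n. int (degree (Rn n))"] unfolding Sp_def Sm_def by simp
  finally show ?thesis using rr Wn0 gnz unfolding Dn_def by blast
qed

end


context redfrac
begin

lemma main_in:
  assumes N: "N > 0"
  shows "dyn_eval d N (Fract p q) \<noteq> 0 \<and> v_inf (dyn_eval d N (Fract p q)) < 0
       \<and> real (ht (dyn_eval d N (Fract p q))) = real_of_int (Ddeg d N) * canon_ht d (Fract p q)
       \<and> real_of_int (\<Sum>c \<in> {c. v_fin c (dyn_eval d N (Fract p q)) > 0}. v_fin c (dyn_eval d N (Fract p q)))
           = real_of_int (Ddeg d N) * canon_ht d (Fract p q)"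
proof -
  define g where "g = dyn_eval d N (Fract p q)"
  obtain W where W: "rnum g = W" "rden g = q ^ nat (Ddeg d N)" "W \<noteq> 0" "g \<noteq> 0"
    "int (degree W) = (\<Sum>n | n dvd N. moebius (N div n) * int (degree (Rn n)))"
    using reduce[OF N] unfolding g_def by blast
  define D where "D = Ddeg d N"
  have Dpos: "D > 0" unfolding D_def using Ddeg_pos[OF d2 N] .
  have pos: "\<And>n. n \<in> {n. n dvd N} \<Longrightarrow> n \<ge> 1" using N by (auto intro: Nat.gr0I)
  have idn: "int (nat D * degree q) = D * int (degree q)" using Dpos by simp
  have key: "degree W > nat D * degree q \<and> real (degree W) = real_of_int D * canon_ht d (Fract p q)"
  proof (cases "degree p > degree q")
    case True
    have "(\<Sum>n | n dvd N. moebius (N div n) * int (degree (Rn n))) = (\<Sum>n | n dvd N. int (degree p) * (moebius (N div n) * int d ^ n))"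
      using Rn_deg_A[OF True] pos by (intro sum.cong) auto
    also have "\<dots> = int (degree p) * D" unfolding D_def Ddeg_def by (simp add: sum_distrib_left)
    finally have dW: "int (degree W) = int (degree p) * D" using W(5) by simp
    have "D * int (degree q) < D * int (degree p)" using True Dpos by simp
    hence "int (nat D * degree q) < int (degree W)" unfolding idn dW by (simp add: mult.commute)
    hence gt: "nat D * degree q < degree W" by (simp only: of_nat_less_iff)
    have "real (degree W) = real_of_int (int (degree W))" by simp
    also have "\<dots> = real_of_int D * real (degree p)" unfolding dW by simp
    finally show ?thesis using gt canon_A[OF True] by simp
  next
    case False
    hence ab: "degree p \<le> degree q" by simp
    have "(\<Sum>n | n dvd N. moebius (N div n) * int (degree (Rn n))) =
          (\<Sum>n | n dvd N. int (degree q) * (moebius (N div n) * int d ^ n) + moebius (N div n) * int d ^ (n - 1))"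
    proof (rule sum.cong[OF refl])
      fix n assume "n \<in> {n. n dvd N}"
      then obtain m where m: "n = Suc m" using pos by (cases n) force+
      show "moebius (N div n) * int (degree (Rn n)) =
            int (degree q) * (moebius (N div n) * int d ^ n) + moebius (N div n) * int d ^ (n - 1)"
        unfolding m Rn_deg_B[OF ab] by (simp add: algebra_simps)
    qed
    also have "\<dots> = int (degree q) * D + Dp d N"
      unfolding D_def Ddeg_def Dp_def by (simp add: sum.distrib sum_distrib_left)
    finally have dW: "int (degree W) = int (degree q) * D + Dp d N" using W(5) by simp
    have Dp: "Dp d N > 0" using Dp_pos[OF d2 N] .
    have "int (nat D * degree q) < int (degree W)" unfolding idn dW using Dp by simp
    hence gt: "nat D * degree q < degree W" by (simp only: of_nat_less_iff)
    have DD: "D = int d * Dp d N" unfolding D_def using Ddeg_Dp[OF N] .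
    have "real (degree W) = real_of_int (int (degree W))" by simp
    also have "\<dots> = real (degree q) * real_of_int D + real_of_int (Dp d N)" unfolding dW by simp
    also have "\<dots> = real_of_int D * ((real (degree q) * real d + 1) / real d)"
      unfolding DD using d2 by (simp add: field_simps)
    finally show ?thesis using gt canon_B[OF ab] by simp
  qed
  have "g \<noteq> 0 \<and> v_inf g < 0 \<and> real (ht g) = real_of_int D * canon_ht d (Fract p q)
       \<and> real_of_int (\<Sum>c \<in> {c. v_fin c g > 0}. v_fin c g) = real_of_int D * canon_ht d (Fract p q)"
    using final_from_reduced[OF N W(1) W(2) W(3) _ _ W(4)] key unfolding D_def by blast
  thus ?thesis unfolding g_def D_def .
qed

end

theorem lemma2p3:
  fixes d N :: nat and \<alpha> :: "'a::field_char_0 ratfun"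
  assumes "alg_closed TYPE('a)"
    and "d \<ge> 2" and "N \<ge> 1"
  shows "dyn_eval d N \<alpha> \<noteq> 0 \<and> v_inf (dyn_eval d N \<alpha>) < 0
       \<and> real (ht (dyn_eval d N \<alpha>)) = real_of_int (Ddeg d N) * canon_ht d \<alpha>
       \<and> real_of_int (\<Sum>c \<in> {c. v_fin c (dyn_eval d N \<alpha>) > 0}. v_fin c (dyn_eval d N \<alpha>))
           = real_of_int (Ddeg d N) * canon_ht d \<alpha>"
proof -
  have P: "rden \<alpha> \<noteq> 0 \<and> lead_coeff (rden \<alpha>) = 1 \<and> coprime (rnum \<alpha>) (rden \<alpha>) \<and> \<alpha> = Fract (rnum \<alpha>) (rden \<alpha>)"
    using rquot_props[OF assms(1)] .
  interpret redfrac "rnum \<alpha>" "rden \<alpha>" d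
    using P assms by unfold_locales auto
  have "N > 0" using assms(3) by simp
  from main_in[OF this] show ?thesis using P by simp
qed


end
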